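(* Let $\langle X,<\rangle$ be an infinite linear ordering and $r$ a positive integer. Then there is $Y\subseteq X$ with $|Y|=|X|$ such that for any $y_1<y_2$ in $Y$ there are elements $x^{(k)}_1,\dots,x^{(k)}_r\in X$ for $k=1,2,3$ (at least $r$ of each) with \[x^{(1)}_1,\dots,x^{(1)}_r<y_1<x^{(2)}_1,\dots,x^{(2)}_r<y_2<x^{(3)}_1,\dots,x^{(3)}_r.\] *)

theory Defs
  imports Main "HOL-Library.Equipollence"
begin

end

theory Submission
  imports Defs
begin

lemma fin_by_card:
  assumes "\<forall>x\<in>S. finite (f x) \<and> card (f x) < (r::nat)"
    and "\<forall>x\<in>S. \<forall>y\<in>S. x \<noteq> y \<longrightarrow> f x \<subset> f y \<or> f y \<subset> f x"
  shows "finite S"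
proof -
  have "inj_on (\<lambda>x. card (f x)) S"
  proof (rule inj_onI)
    fix x y assume xy: "x \<in> S" "y \<in> S" "card (f x) = card (f y)"
    show "x = y"
    proof (rule ccontr)
      assume "x \<noteq> y"
      then have "f x \<subset> f y \<or> f y \<subset> f x" using assms(2) xy by blast
      then show False using psubset_card_mono assms(1) xy by (metis less_irrefl)
    qed
  qed
  moreover have "(\<lambda>x. card (f x)) ` S \<subseteq> {..<r}" using assms(1) by auto
  ultimately show ?thesis by (meson finite_imageD finite_lessThan finite_subset)
qed

lemma get_sub:
  assumes "\<not> (finite D \<and> card D < (r::nat))"
  shows "\<exists>B\<subseteq>D. finite B \<and> card B = r"
proof (cases "finite D")
  case True
  then have "r \<le> card D" using assms by auto
  then show ?thesis by (meson obtain_subset_with_card_n)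
next
  case False
  then show ?thesis using infinite_arbitrarily_large by blast
qed

theorem fact3p2:
  fixes X :: "'a set" and R :: "'a rel" and r :: nat
  assumes "linear_order_on X R"
    and "infinite X"
    and "0 < r"
  shows "\<exists>Y \<subseteq> X. Y \<approx> X \<and>
           (\<forall>y1\<in>Y. \<forall>y2\<in>Y. (y1, y2) \<in> R - Id \<longrightarrow>
              (\<exists>A B C. A \<subseteq> X \<and> B \<subseteq> X \<and> C \<subseteq> X \<and>
                 finite A \<and> finite B \<and> finite C \<and>
                 card A = r \<and> card B = r \<and> card C = r \<and>
                 (\<forall>a\<in>A. (a, y1) \<in> R - Id) \<and>
                 (\<forall>b\<in>B. (y1, b) \<in> R - Id \<and> (b, y2) \<in> R - Id) \<and>
                 (\<forall>c\<in>C. (y2, c) \<in> R - Id)))"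
proof -
  have sub: "R \<subseteq> X \<times> X" and tr: "trans R" and an: "antisym R" and tot: "total_on X R"
    using assms(1) unfolding linear_order_on_def partial_order_on_def preorder_on_def by auto
  have lt_trans: "(a, c) \<in> R - Id" if "(a, b) \<in> R - Id" "(b, c) \<in> R - Id" for a b c
  proof -
    have ab: "(a, b) \<in> R" "a \<noteq> b" and bc: "(b, c) \<in> R" "b \<noteq> c" using that by auto
    have "(a, c) \<in> R" using ab bc tr transD by fast
    moreover have "a \<noteq> c"
    proof
      assume "a = c"
      then have "(b, a) \<in> R" using bc by simp
      then have "a = b" using ab an antisymD by fast
      then show False using ab by simp
    qed
    ultimately show ?thesis by auto
  qed
  have cmp: "(a, b) \<in> R - Id \<or> (b, a) \<in> R - Id" if "a \<in> X" "b \<in> X" "a \<noteq> b" for a b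
    using tot that unfolding total_on_def by auto
  have irr: "(a, a) \<notin> R - Id" for a by auto
  define below where "below x = {z\<in>X. (z, x) \<in> R - Id}" for x
  define above where "above x = {z\<in>X. (x, z) \<in> R - Id}" for x
  define btw where "btw a b = {z\<in>X. (a, z) \<in> R - Id \<and> (z, b) \<in> R - Id}" for a b
  define small where "small D = (finite D \<and> card D < r)" for D :: "'a set"
  define G where "G = {x\<in>X. \<not> small (below x) \<and> \<not> small (above x)}"
  define Sep where "Sep a b = (\<not> small (btw a b))" for a b
  define \<A> where "\<A> = {S. S \<subseteq> G \<and> (\<forall>a\<in>S. \<forall>b\<in>S. (a, b) \<in> R - Id \<longrightarrow> Sep a b)}"
  have "\<forall>C\<in>chains \<A>. \<Union>C \<in> \<A>"
  proof
    fix C assume C: "C \<in> chains \<A>"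
    then have CA: "C \<subseteq> \<A>" and ch: "\<forall>S\<in>C. \<forall>T\<in>C. S \<subseteq> T \<or> T \<subseteq> S"
      unfolding chains_def chain_subset_def by auto
    have "\<forall>a\<in>\<Union>C. \<forall>b\<in>\<Union>C. (a, b) \<in> R - Id \<longrightarrow> Sep a b"
    proof (intro ballI impI)
      fix a b assume "a \<in> \<Union>C" "b \<in> \<Union>C" "(a, b) \<in> R - Id"
      then obtain S T where "S \<in> C" "T \<in> C" "a \<in> S" "b \<in> T" by auto
      then obtain U where "U \<in> C" "a \<in> U" "b \<in> U" using ch by blast
      then show "Sep a b" using CA \<open>(a, b) \<in> R - Id\<close> unfolding \<A>_def by blast
    qed
    moreover have "\<Union>C \<subseteq> G" using CA unfolding \<A>_def by auto
    ultimately show "\<Union>C \<in> \<A>" unfolding \<A>_def by blast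
  qed
  from Zorn_Lemma[OF this] obtain Y where YA: "Y \<in> \<A>" and Ymax: "\<forall>Z\<in>\<A>. Y \<subseteq> Z \<longrightarrow> Z = Y"
    by blast
  have YG: "Y \<subseteq> G" and Ysep: "\<forall>a\<in>Y. \<forall>b\<in>Y. (a, b) \<in> R - Id \<longrightarrow> Sep a b"
    using YA unfolding \<A>_def by auto
  have GX: "G \<subseteq> X" unfolding G_def by auto
  have finL: "finite {x\<in>X. small (below x)}"
  proof (rule fin_by_card[where f=below and r=r])
    show "\<forall>x\<in>{x\<in>X. small (below x)}. finite (below x) \<and> card (below x) < r"
      unfolding small_def by auto
    show "\<forall>x\<in>{x\<in>X. small (below x)}. \<forall>y\<in>{x\<in>X. small (below x)}. x \<noteq> y \<longrightarrow>
        below x \<subset> below y \<or> below y \<subset> below x"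
    proof (intro ballI impI)
      fix x y assume "x \<in> {x\<in>X. small (below x)}" "y \<in> {x\<in>X. small (below x)}" "x \<noteq> y"
      then have "(x, y) \<in> R - Id \<or> (y, x) \<in> R - Id" using cmp by auto
      moreover have "below x \<subset> below y" if "(x, y) \<in> R - Id" for x y
      proof -
        have "below x \<subseteq> below y" unfolding below_def using lt_trans that by blast
        moreover have "x \<in> below y" "x \<notin> below x" unfolding below_def using that sub by auto
        ultimately show ?thesis by blast
      qed
      ultimately show "below x \<subset> below y \<or> below y \<subset> below x" by blast
    qed
  qed
  have finU: "finite {x\<in>X. small (above x)}"
  proof (rule fin_by_card[where f=above and r=r])
    show "\<forall>x\<in>{x\<in>X. small (above x)}. finite (above x) \<and> card (above x) < r"
      unfolding small_def by auto
    show "\<forall>x\<in>{x\<in>X. small (above x)}. \<forall>y\<in>{x\<in>X. small (above x)}. x \<noteq> y \<longrightarrow>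
        above x \<subset> above y \<or> above y \<subset> above x"
    proof (intro ballI impI)
      fix x y assume "x \<in> {x\<in>X. small (above x)}" "y \<in> {x\<in>X. small (above x)}" "x \<noteq> y"
      then have "(x, y) \<in> R - Id \<or> (y, x) \<in> R - Id" using cmp by auto
      moreover have "above y \<subset> above x" if "(x, y) \<in> R - Id" for x y
      proof -
        have "above y \<subseteq> above x" unfolding above_def using lt_trans that by blast
        moreover have "y \<in> above x" "y \<notin> above y" unfolding above_def using that sub by auto
        ultimately show ?thesis by blast
      qed
      ultimately show "above x \<subset> above y \<or> above y \<subset> above x" by blast
    qed
  qed
  define F where "F = {x\<in>X. small (below x)} \<union> {x\<in>X. small (above x)}"
  have finF: "finite F" unfolding F_def using finL finU by auto
  define N where "N y = F \<union> {y} \<union> {x\<in>X. (y, x) \<in> R - Id \<and> \<not> Sep y x}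
       \<union> {x\<in>X. (x, y) \<in> R - Id \<and> \<not> Sep x y}" for y
  have finN: "finite (N y)" for y
  proof -
    have f1: "finite {x\<in>X. (y, x) \<in> R - Id \<and> \<not> Sep y x}"
    proof (rule fin_by_card[where f="btw y" and r=r])
      show "\<forall>x\<in>{x\<in>X. (y, x) \<in> R - Id \<and> \<not> Sep y x}. finite (btw y x) \<and> card (btw y x) < r"
        unfolding Sep_def small_def by auto
      show "\<forall>x\<in>{x\<in>X. (y, x) \<in> R - Id \<and> \<not> Sep y x}. \<forall>x'\<in>{x\<in>X. (y, x) \<in> R - Id \<and> \<not> Sep y x}.
         x \<noteq> x' \<longrightarrow> btw y x \<subset> btw y x' \<or> btw y x' \<subset> btw y x"
      proof (intro ballI impI)
        fix x x' assume A: "x \<in> {x\<in>X. (y, x) \<in> R - Id \<and> \<not> Sep y x}"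
          "x' \<in> {x\<in>X. (y, x) \<in> R - Id \<and> \<not> Sep y x}" "x \<noteq> x'"
        then have "(x, x') \<in> R - Id \<or> (x', x) \<in> R - Id" using cmp by auto
        moreover have "btw y x \<subset> btw y x'" if "(x, x') \<in> R - Id" "(y, x) \<in> R - Id" "x \<in> X" for x x'
        proof -
          have "btw y x \<subseteq> btw y x'" unfolding btw_def using lt_trans that by blast
          moreover have "x \<in> btw y x'" "x \<notin> btw y x" unfolding btw_def using that by auto
          ultimately show ?thesis by blast
        qed
        ultimately show "btw y x \<subset> btw y x' \<or> btw y x' \<subset> btw y x" using A by blast
      qed
    qed
    have f2: "finite {x\<in>X. (x, y) \<in> R - Id \<and> \<not> Sep x y}"
    proof (rule fin_by_card[where f="\<lambda>x. btw x y" and r=r])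
      show "\<forall>x\<in>{x\<in>X. (x, y) \<in> R - Id \<and> \<not> Sep x y}. finite (btw x y) \<and> card (btw x y) < r"
        unfolding Sep_def small_def by auto
      show "\<forall>x\<in>{x\<in>X. (x, y) \<in> R - Id \<and> \<not> Sep x y}. \<forall>x'\<in>{x\<in>X. (x, y) \<in> R - Id \<and> \<not> Sep x y}.
         x \<noteq> x' \<longrightarrow> btw x y \<subset> btw x' y \<or> btw x' y \<subset> btw x y"
      proof (intro ballI impI)
        fix x x' assume A: "x \<in> {x\<in>X. (x, y) \<in> R - Id \<and> \<not> Sep x y}"
          "x' \<in> {x\<in>X. (x, y) \<in> R - Id \<and> \<not> Sep x y}" "x \<noteq> x'"
        then have "(x, x') \<in> R - Id \<or> (x', x) \<in> R - Id" using cmp by auto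
        moreover have "btw x' y \<subset> btw x y" if "(x, x') \<in> R - Id" "(x', y) \<in> R - Id" "x' \<in> X" for x x'
        proof -
          have "btw x' y \<subseteq> btw x y" unfolding btw_def using lt_trans that by blast
          moreover have "x' \<in> btw x y" "x' \<notin> btw x' y" unfolding btw_def using that by auto
          ultimately show ?thesis by blast
        qed
        ultimately show "btw x y \<subset> btw x' y \<or> btw x' y \<subset> btw x y" using A by blast
      qed
    qed
    show ?thesis unfolding N_def using finF f1 f2 by auto
  qed
  have cover: "X \<subseteq> F \<union> (\<Union>y\<in>Y. N y)"
  proof
    fix x assume xX: "x \<in> X"
    show "x \<in> F \<union> (\<Union>y\<in>Y. N y)"
    proof (cases "x \<in> F \<or> x \<in> Y")
      case True then show ?thesis unfolding N_def by auto
    next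
      case False
      then have xG: "x \<in> G" using xX unfolding F_def G_def by auto
      have "\<exists>y\<in>Y. x \<in> N y"
      proof (rule ccontr)
        assume nc: "\<not> (\<exists>y\<in>Y. x \<in> N y)"
        have "insert x Y \<in> \<A>"
          unfolding \<A>_def
        proof (intro CollectI conjI ballI impI)
          show "insert x Y \<subseteq> G" using xG YG by auto
          fix a b assume ab: "a \<in> insert x Y" "b \<in> insert x Y" "(a, b) \<in> R - Id"
          show "Sep a b"
          proof (cases "a = x")
            case True
            then have "b \<in> Y" using ab by auto
            then show ?thesis using nc ab True xX unfolding N_def by auto
          next
            case F1: False
            then have aY: "a \<in> Y" using ab by auto
            show ?thesis
            proof (cases "b = x")
              case True
              then show ?thesis using nc aY ab xX unfolding N_def by auto
            next
              case False
              then show ?thesis using aY ab Ysep by auto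
            qed
          qed
        qed
        then have "insert x Y = Y" using Ymax by blast
        then show False using False by auto
      qed
      then show ?thesis by auto
    qed
  qed
  have YX: "Y \<subseteq> X" using YG GX by auto
  have Yinf: "infinite Y"
  proof
    assume "finite Y"
    then have "finite (F \<union> (\<Union>y\<in>Y. N y))" using finF finN by auto
    then show False using cover assms(2) finite_subset by blast
  qed
  have "(card_of (\<Union>y\<in>Y. N y), card_of Y) \<in> ordLeq"
  proof (rule card_of_UNION_ordLeq_infinite[OF Yinf])
    show "(card_of Y, card_of Y) \<in> ordLeq" by (rule card_of_mono1) simp
    show "\<forall>y\<in>Y. (card_of (N y), card_of Y) \<in> ordLeq"
    proof
      fix y assume "y \<in> Y"
      have "N y \<lesssim> Y" using finite_lepoll_infinite finN Yinf by blast
      then show "(card_of (N y), card_of Y) \<in> ordLeq" unfolding lepoll_def using card_of_ordLeq by blast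
    qed
  qed
  then have "(\<Union>y\<in>Y. N y) \<lesssim> Y" unfolding lepoll_def using card_of_ordLeq by blast
  moreover obtain y0 where "y0 \<in> Y" using Yinf by fastforce
  then have "F \<union> (\<Union>y\<in>Y. N y) = (\<Union>y\<in>Y. N y)" unfolding N_def by auto
  ultimately have "X \<lesssim> Y" using cover by (metis lepoll_trans subset_imp_lepoll)
  then have eq: "Y \<approx> X" using YX by (simp add: lepoll_antisym subset_imp_lepoll)
  show ?thesis
  proof (rule exI[of _ Y], intro conjI YX eq ballI impI)
    fix y1 y2 assume y: "y1 \<in> Y" "y2 \<in> Y" "(y1, y2) \<in> R - Id"
    obtain A where A: "A \<subseteq> below y1" "finite A" "card A = r"
      using get_sub[of "below y1" r] y YG unfolding G_def small_def by blast
    obtain C where C: "C \<subseteq> above y2" "finite C" "card C = r"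
      using get_sub[of "above y2" r] y YG unfolding G_def small_def by blast
    obtain B where B: "B \<subseteq> btw y1 y2" "finite B" "card B = r"
      using get_sub[of "btw y1 y2" r] y Ysep unfolding Sep_def small_def by blast
    show "\<exists>A B C. A \<subseteq> X \<and> B \<subseteq> X \<and> C \<subseteq> X \<and>
                 finite A \<and> finite B \<and> finite C \<and>
                 card A = r \<and> card B = r \<and> card C = r \<and>
                 (\<forall>a\<in>A. (a, y1) \<in> R - Id) \<and>
                 (\<forall>b\<in>B. (y1, b) \<in> R - Id \<and> (b, y2) \<in> R - Id) \<and>
                 (\<forall>c\<in>C. (y2, c) \<in> R - Id)"
      apply (rule exI[of _ A], rule exI[of _ B], rule exI[of _ C])
      using A B C unfolding below_def above_def btw_def by blast
  qed
qed

end
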